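(* Consider formal expressions which are finite sums (with multiplicities) of finite products of factors $s_{ab}=\sin(\theta_b-\theta_a)$, $a<b$ natural numbers, where the $\theta_i$ are indeterminate angles. Formally, a product is a finite multiset of 2-element subsets of $\mathbb{N}$ and an expression is a finite multiset of products. An expansion step applies the identity $\sin(\theta_c-\theta_a)\sin(\theta_d-\theta_b)=\sin(\theta_b-\theta_a)\sin(\theta_d-\theta_c)+\sin(\theta_d-\theta_a)\sin(\theta_c-\theta_b)$ with $a<b<c<d$: one chooses a product $p$ in the expression containing (as members of the multiset) both $\{a,c\}$ and $\{b,d\}$ with $a<b<c<d$, removes one copy of $p$ from the expression, and adds the two products obtained from $p$ by replacing one copy each of $\{a,c\},\{b,d\}$ by $\{a,b\},\{c,d\}$, respectively by $\{a,d\},\{b,c\}$. Then, starting from any expression, repeated application of expansion steps always terminates, and the expression reached when no expansion step applies (the normal form) is uniquely determined by the starting expression.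
   Context: Multisets: a product may contain the same pair several times, and an expression may contain the same product several times; removal and addition are multiset operations. Each expansion step does not change the value of the expression as a function of the $\theta_i$. *)

theory Defs
  imports Main "HOL-Library.Multiset"
begin

text \<open>A pair {a,b} (a 2-element subset of nat) stands for sin(theta_b - theta_a), a<b.
  A product is a finite multiset of such pairs, an expression a finite multiset of products.\<close>

type_synonym product = "nat set multiset"
type_synonym expr = "product multiset"

definition valid_expr :: "expr \<Rightarrow> bool" where
  "valid_expr E \<longleftrightarrow> (\<forall>p \<in># E. \<forall>s \<in># p. card s = 2)"

definition expand_step :: "expr \<Rightarrow> expr \<Rightarrow> bool" where
  "expand_step E E' \<longleftrightarrow>
     (\<exists>p a b c d. p \<in># E \<and> a < b \<and> b < c \<and> c < d \<and>
        {a, c} \<in># p \<and> {b, d} \<in># p \<and>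
        E' = E - {#p#} +
             {# p - {#{a, c}, {b, d}#} + {#{a, b}, {c, d}#},
                p - {#{a, c}, {b, d}#} + {#{a, d}, {b, c}#} #})"

definition normal_form :: "expr \<Rightarrow> bool" where
  "normal_form E \<longleftrightarrow> (\<nexists>E'. expand_step E E')"

end

theory Submission
  imports Defs
begin

lemma step_intro:
  assumes "p \<in># E" "a < b" "b < c" "c < d" "{a,c} \<in># p" "{b,d} \<in># p"
  shows "expand_step E (E - {#p#} + {# p - {#{a, c}, {b, d}#} + {#{a, b}, {c, d}#},
                p - {#{a, c}, {b, d}#} + {#{a, d}, {b, c}#} #})"
  using assms unfolding expand_step_def by blast

lemma step_context:
  assumes "expand_step E E'"
  shows "expand_step (Q + E) (Q + E')"
proof -
  from assms obtain p a b c d where h: "p \<in># E" "a < b" "b < c" "c < d"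
    "{a, c} \<in># p" "{b, d} \<in># p"
    "E' = E - {#p#} + {# p - {#{a, c}, {b, d}#} + {#{a, b}, {c, d}#},
                p - {#{a, c}, {b, d}#} + {#{a, d}, {b, c}#} #}"
    unfolding expand_step_def by blast
  have "Q + E' = (Q + E) - {#p#} + {# p - {#{a, c}, {b, d}#} + {#{a, b}, {c, d}#},
                p - {#{a, c}, {b, d}#} + {#{a, d}, {b, c}#} #}"
    using h(1,7) by (metis add.assoc diff_union_single_conv)
  moreover have "p \<in># Q + E" using h(1) by simp
  ultimately show ?thesis using h unfolding expand_step_def by blast
qed

lemma steps_context:
  assumes "expand_step\<^sup>*\<^sup>* E E'"
  shows "expand_step\<^sup>*\<^sup>* (Q + E) (Q + E')"
  using assms
proof (induction rule: rtranclp_induct)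
  case base then show ?case by simp
next
  case (step y z) then show ?case using step_context
    by (meson rtranclp.rtrancl_into_rtrancl)
qed

lemma split2:
  assumes "x \<in># p" "y \<in># p" "x \<noteq> y"
  shows "\<exists>R. p = add_mset x (add_mset y R)"
proof -
  obtain R1 where R1: "p = add_mset x R1" using assms(1) by (meson multi_member_split)
  have "y \<in># R1" using assms(2,3) R1 by auto
  then obtain R where "R1 = add_mset y R" by (meson multi_member_split)
  with R1 show ?thesis by blast
qed

lemma chd_eq: "(x::nat) < y \<Longrightarrow> u < v \<Longrightarrow> {x,y} = {u,v} \<longleftrightarrow> x = u \<and> y = v"
  by (auto simp: doubleton_eq_iff)

lemma step_elim:
  assumes "expand_step E E'"
  obtains p a b c d R where "p \<in># E" "a < b" "b < c" "c < d"
    "p = add_mset {a,c} (add_mset {b,d} R)"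
    "E' = E - {#p#} + {#add_mset {a,b} (add_mset {c,d} R), add_mset {a,d} (add_mset {b,c} R)#}"
proof -
  from assms obtain p a b c d where h: "p \<in># E" "a < b" "b < c" "c < d"
    "{a, c} \<in># p" "{b, d} \<in># p"
    "E' = E - {#p#} + {# p - {#{a, c}, {b, d}#} + {#{a, b}, {c, d}#},
                p - {#{a, c}, {b, d}#} + {#{a, d}, {b, c}#} #}"
    unfolding expand_step_def by blast
  have ne: "{a,c} \<noteq> {b,d}" using h(2-4) by (subst chd_eq) auto
  obtain R where R: "p = add_mset {a,c} (add_mset {b,d} R)" using split2[OF h(5,6) ne] by blast
  have "E' = E - {#p#} + {#add_mset {a,b} (add_mset {c,d} R), add_mset {a,d} (add_mset {b,c} R)#}"
    using h(7) R by simp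
  then show ?thesis using that h(1-4) R by blast
qed

lemma step_intro2:
  assumes "p \<in># E" "a < b" "b < c" "c < d" "p = add_mset {a,c} (add_mset {b,d} R)"
  shows "expand_step E (E - {#p#} + {#add_mset {a,b} (add_mset {c,d} R), add_mset {a,d} (add_mset {b,c} R)#})"
proof -
  have "{a,c} \<in># p" "{b,d} \<in># p" using assms(5) by auto
  from step_intro[OF assms(1-4) this] show ?thesis using assms(5) by simp
qed

lemma single_step:
  assumes "a < b" "b < c" "c < d" "p = add_mset {a,c} (add_mset {b,d} R)"
    "p1 = add_mset {a,b} (add_mset {c,d} R)" "p2 = add_mset {a,d} (add_mset {b,c} R)"
  shows "expand_step {#p#} {#p1, p2#}"
  using step_intro2[of p "{#p#}" a b c d R] assms by simp

section \<open>Termination\<close>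

definition wt :: "nat \<Rightarrow> nat set \<Rightarrow> nat" where
  "wt M s = (if card s = 2 then 2*M*(Max s - Min s) - (Max s - Min s)^2 else 0)"

definition phi :: "nat \<Rightarrow> product \<Rightarrow> nat" where
  "phi M p = sum_mset (image_mset (wt M) p)"

definition bnd :: "nat \<Rightarrow> expr \<Rightarrow> bool" where
  "bnd M x \<longleftrightarrow> (\<forall>p\<in>#x. \<forall>s\<in>#p. card s = 2 \<longrightarrow> (\<forall>v\<in>s. v \<le> M))"

lemma wt_pair: "(i::nat) < j \<Longrightarrow> wt M {i,j} = 2*M*(j-i) - (j-i)^2"
  by (simp add: wt_def max_def min_def)

lemma int_wt: "(L::nat) \<le> M \<Longrightarrow> int (2*M*L - L^2) = 2 * int M * int L - int L ^ 2"
proof -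
  assume "L \<le> M"
  then have "L^2 \<le> 2*M*L" by (simp add: power2_eq_square mult_right_mono)
  then show ?thesis by (simp add: of_nat_diff)
qed

lemma ineq_main:
  fixes x y z M :: int
  assumes "x > 0" "y > 0" "z > 0" "x + y + z \<le> M"
  shows "(2*M*x - x^2) + (2*M*z - z^2) < (2*M*(x+y) - (x+y)^2) + (2*M*(y+z) - (y+z)^2)"
    and "(2*M*(x+y+z) - (x+y+z)^2) + (2*M*y - y^2) < (2*M*(x+y) - (x+y)^2) + (2*M*(y+z) - (y+z)^2)"
proof -
  have "0 < y * (2*M - x - y - z)" using assms by (intro mult_pos_pos) auto
  moreover have "y * (2*M - x - y - z) = 2*M*y - x*y - y*y - z*y" by algebra
  ultimately have p1: "0 < 2*M*y - x*y - y*y - z*y" by linarith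
  have e1: "((2*M*(x+y) - (x+y)^2) + (2*M*(y+z) - (y+z)^2)) - ((2*M*x - x^2) + (2*M*z - z^2))
     = 2*(2*M*y - x*y - y*y - z*y)" by algebra
  from p1 e1 show "(2*M*x - x^2) + (2*M*z - z^2) < (2*M*(x+y) - (x+y)^2) + (2*M*(y+z) - (y+z)^2)"
    by (smt (verit))
  have p2: "0 < x * z" using assms by simp
  have e2: "((2*M*(x+y) - (x+y)^2) + (2*M*(y+z) - (y+z)^2)) - ((2*M*(x+y+z) - (x+y+z)^2) + (2*M*y - y^2))
     = 2*(x*z)" by algebra
  from p2 e2 show "(2*M*(x+y+z) - (x+y+z)^2) + (2*M*y - y^2) < (2*M*(x+y) - (x+y)^2) + (2*M*(y+z) - (y+z)^2)"
    by (smt (verit))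
qed

lemma wt_ineq:
  assumes "a < b" "b < c" "c < d" "d \<le> M"
  shows "wt M {a,b} + wt M {c,d} < wt M {a,c} + wt M {b,d}"
    and "wt M {a,d} + wt M {b,c} < wt M {a,c} + wt M {b,d}"
proof -
  define x where "x = int (b - a)"
  define y where "y = int (c - b)"
  define z where "z = int (d - c)"
  have e1: "int (c - a) = x + y" "int (d - b) = y + z" "int (d - a) = x + y + z"
    using assms unfolding x_def y_def z_def by auto
  have pos: "x > 0" "y > 0" "z > 0" "x + y + z \<le> int M" using assms unfolding x_def y_def z_def by auto
  have w: "int (wt M {a,b}) = 2*int M*x - x^2" "int (wt M {c,d}) = 2*int M*z - z^2"
    "int (wt M {a,c}) = 2*int M*(x+y) - (x+y)^2" "int (wt M {b,d}) = 2*int M*(y+z) - (y+z)^2"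
    "int (wt M {a,d}) = 2*int M*(x+y+z) - (x+y+z)^2" "int (wt M {b,c}) = 2*int M*y - y^2"
    using assms unfolding x_def y_def z_def
    by (subst wt_pair, simp, subst int_wt, simp, simp add: of_nat_diff)+
  show "wt M {a,b} + wt M {c,d} < wt M {a,c} + wt M {b,d}"
    using ineq_main(1)[OF pos] w by linarith
  show "wt M {a,d} + wt M {b,c} < wt M {a,c} + wt M {b,d}"
    using ineq_main(2)[OF pos] w by linarith
qed

lemma phi_add: "phi M (add_mset s p) = wt M s + phi M p"
  by (simp add: phi_def)

lemma bnd_step:
  assumes "bnd M x" "expand_step x y"
  shows "bnd M y"
proof -
  obtain p a b c d R where h: "p \<in># x" "a < b" "b < c" "c < d"
    "p = add_mset {a,c} (add_mset {b,d} R)"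
    "y = x - {#p#} + {#add_mset {a,b} (add_mset {c,d} R), add_mset {a,d} (add_mset {b,c} R)#}"
    using step_elim[OF assms(2)] by blast
  have cd: "c \<le> M" "d \<le> M" using assms(1) h(1-5) unfolding bnd_def
    by (auto simp: card_insert_if)
  have R: "\<forall>s\<in>#R. card s = 2 \<longrightarrow> (\<forall>v\<in>s. v \<le> M)" using assms(1) h(1,5) unfolding bnd_def by auto
  show ?thesis unfolding bnd_def
  proof (intro ballI)
    fix q s assume q: "q \<in># y" and s: "s \<in># q"
    show "card s = 2 \<longrightarrow> (\<forall>v\<in>s. v \<le> M)"
    proof (cases "q \<in># x - {#p#}")
      case True then have "q \<in># x" by (meson in_diffD)
      then show ?thesis using assms(1) s unfolding bnd_def by blast
    next
      case False
      then have "q = add_mset {a,b} (add_mset {c,d} R) \<or> q = add_mset {a,d} (add_mset {b,c} R)"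
        using q h(6) by auto
      then show ?thesis using s R cd h(2-4) by auto
    qed
  qed
qed

lemma meas_dec:
  assumes "bnd M x" "expand_step x y"
  shows "(image_mset (phi M) y, image_mset (phi M) x) \<in> mult less_than"
proof -
  obtain p a b c d R where h: "p \<in># x" "a < b" "b < c" "c < d"
    "p = add_mset {a,c} (add_mset {b,d} R)"
    "y = x - {#p#} + {#add_mset {a,b} (add_mset {c,d} R), add_mset {a,d} (add_mset {b,c} R)#}"
    using step_elim[OF assms(2)] by blast
  have dM: "d \<le> M" using assms(1) h(1-5) unfolding bnd_def by (auto simp: card_insert_if)
  define I where "I = image_mset (phi M) (x - {#p#})"
  have x: "image_mset (phi M) x = I + {#phi M p#}"
    unfolding I_def using h(1) by (metis image_mset_add_mset insert_DiffM union_mset_add_mset_right add_0_right image_mset_union)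
  have y: "image_mset (phi M) y = I + {#phi M (add_mset {a,b} (add_mset {c,d} R)), phi M (add_mset {a,d} (add_mset {b,c} R))#}"
    unfolding I_def h(6) by simp
  have lt: "phi M (add_mset {a,b} (add_mset {c,d} R)) < phi M p"
       "phi M (add_mset {a,d} (add_mset {b,c} R)) < phi M p"
    using wt_ineq[OF h(2-4) dM] unfolding h(5) by (simp_all add: phi_add)
  show ?thesis unfolding x y
    by (rule one_step_implies_mult) (use lt in auto)
qed

section \<open>Newman's lemma (relative to an invariant)\<close>

lemma rt_inv:
  assumes "r\<^sup>*\<^sup>* x y" "I x" "\<And>x y. I x \<Longrightarrow> r x y \<Longrightarrow> I y"
  shows "I y"
  using assms(1,2) by (induction rule: rtranclp_induct) (auto intro: assms(3))

lemma nf_exists: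
  assumes wf: "wf {(y,x). I x \<and> r x y}" and inv: "\<And>x y. I x \<Longrightarrow> r x y \<Longrightarrow> I y"
  shows "I x \<longrightarrow> (\<exists>n. r\<^sup>*\<^sup>* x n \<and> \<not>(\<exists>u. r n u))"
proof (induction x rule: wf_induct_rule[OF wf])
  case (1 x)
  show ?case
  proof
    assume Ix: "I x"
    show "\<exists>n. r\<^sup>*\<^sup>* x n \<and> \<not>(\<exists>u. r n u)"
    proof (cases "\<exists>u. r x u")
      case True
      then obtain u where u: "r x u" by blast
      then have "I u" using inv Ix by blast
      moreover have "(u,x) \<in> {(y,x). I x \<and> r x y}" using u Ix by simp
      ultimately obtain n where "r\<^sup>*\<^sup>* u n" "\<not>(\<exists>v. r n v)" using 1 by blast
      then show ?thesis using u by (meson converse_rtranclp_into_rtranclp)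
    next
      case False then show ?thesis by blast
    qed
  qed
qed

lemma newman:
  assumes wf: "wf {(y,x). I x \<and> r x y}" and inv: "\<And>x y. I x \<Longrightarrow> r x y \<Longrightarrow> I y"
    and lc: "\<And>x y z. I x \<Longrightarrow> r x y \<Longrightarrow> r x z \<Longrightarrow> \<exists>w. r\<^sup>*\<^sup>* y w \<and> r\<^sup>*\<^sup>* z w"
  shows "\<forall>y z. I x \<longrightarrow> r\<^sup>*\<^sup>* x y \<longrightarrow> \<not>(\<exists>u. r y u) \<longrightarrow> r\<^sup>*\<^sup>* x z \<longrightarrow> \<not>(\<exists>u. r z u) \<longrightarrow> y = z"
proof (induction x rule: wf_induct_rule[OF wf])
  case (1 x)
  show ?case
  proof (intro allI impI)
    fix y z
    assume Ix: "I x" and xy: "r\<^sup>*\<^sup>* x y" and ny: "\<not>(\<exists>u. r y u)"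
      and xz: "r\<^sup>*\<^sup>* x z" and nz: "\<not>(\<exists>u. r z u)"
    show "y = z"
    proof (cases "x = y")
      case True
      then have "\<not>(\<exists>u. r x u)" using ny by simp
      then have "x = z" using xz by (metis converse_rtranclpE)
      then show ?thesis using True by simp
    next
      case False
      then obtain y1 where xy1: "r x y1" and y1y: "r\<^sup>*\<^sup>* y1 y" using xy by (metis converse_rtranclpE)
      show ?thesis
      proof (cases "x = z")
        case True
        then show ?thesis using nz xy1 by blast
      next
        case False
        then obtain z1 where xz1: "r x z1" and z1z: "r\<^sup>*\<^sup>* z1 z" using xz by (metis converse_rtranclpE)
        obtain w where w: "r\<^sup>*\<^sup>* y1 w" "r\<^sup>*\<^sup>* z1 w" using lc[OF Ix xy1 xz1] by blast
        have Iy1: "I y1" using inv Ix xy1 by blast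
        have Iz1: "I z1" using inv Ix xz1 by blast
        have Iw: "I w" using rt_inv[of r y1 w I] w(1) Iy1 inv by blast
        obtain n where n: "r\<^sup>*\<^sup>* w n" "\<not>(\<exists>u. r n u)" using nf_exists[of I r w] wf inv Iw by blast
        have "(y1,x) \<in> {(y,x). I x \<and> r x y}" "(z1,x) \<in> {(y,x). I x \<and> r x y}" using xy1 xz1 Ix by auto
        then have IH1: "\<forall>y z. I y1 \<longrightarrow> r\<^sup>*\<^sup>* y1 y \<longrightarrow> \<not>(\<exists>u. r y u) \<longrightarrow> r\<^sup>*\<^sup>* y1 z \<longrightarrow> \<not>(\<exists>u. r z u) \<longrightarrow> y = z"
          and IH2: "\<forall>y z. I z1 \<longrightarrow> r\<^sup>*\<^sup>* z1 y \<longrightarrow> \<not>(\<exists>u. r y u) \<longrightarrow> r\<^sup>*\<^sup>* z1 z \<longrightarrow> \<not>(\<exists>u. r z u) \<longrightarrow> y = z"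
          using 1 by blast+
        have "y = n" using IH1 Iy1 y1y ny n w(1) by (meson rtranclp_trans)
        moreover have "z = n" using IH2 Iz1 z1z nz n w(2) by (meson rtranclp_trans)
        ultimately show ?thesis by simp
      qed
    qed
  qed
qed

section \<open>Executable normalisation on concrete chord lists\<close>

definition quads :: "(nat\<times>nat\<times>nat\<times>nat) list" where
 "quads = filter (\<lambda>(a,b,c,d). a<b \<and> b<c \<and> c<d) (List.product [0..<6] (List.product [0..<6] (List.product [0..<6] [0..<6])))"

lemma quads_iff: "(a,b,c,d) \<in> set quads \<longleftrightarrow> a<b \<and> b<c \<and> c<d \<and> d<6"
  by (auto simp: quads_def)

definition redex :: "(nat\<times>nat) list \<Rightarrow> (nat\<times>nat\<times>nat\<times>nat) option" where
 "redex L = map_option (\<lambda>((a,c),(b,d)). (a,b,c,d))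
     (find (\<lambda>((a,c),(b,d)). a<b \<and> b<c \<and> c<d) (List.product L L))"

fun res1 :: "(nat\<times>nat) list \<Rightarrow> nat\<times>nat\<times>nat\<times>nat \<Rightarrow> (nat\<times>nat) list" where
 "res1 L (a,b,c,d) = (a,b) # (c,d) # remove1 (b,d) (remove1 (a,c) L)"
fun res2 :: "(nat\<times>nat) list \<Rightarrow> nat\<times>nat\<times>nat\<times>nat \<Rightarrow> (nat\<times>nat) list" where
 "res2 L (a,b,c,d) = (a,d) # (b,c) # remove1 (b,d) (remove1 (a,c) L)"

fun nstep :: "(nat\<times>nat) list list \<Rightarrow> (nat\<times>nat) list list option" where
 "nstep [] = None"
| "nstep (L#P) = (case redex L of Some q \<Rightarrow> Some (res1 L q # res2 L q # P)
     | None \<Rightarrow> map_option ((#) L) (nstep P))"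

fun norm :: "nat \<Rightarrow> (nat\<times>nat) list list \<Rightarrow> (nat\<times>nat) list list" where
 "norm 0 P = P"
| "norm (Suc n) P = (case nstep P of None \<Rightarrow> P | Some P' \<Rightarrow> norm n P')"

fun shr :: "nat\<times>nat\<times>nat\<times>nat \<Rightarrow> nat\<times>nat\<times>nat\<times>nat \<Rightarrow> bool" where
 "shr (a,b,c,d) (a',b',c',d') = ((a',c') = (a,c) \<or> (a',c') = (b,d) \<or> (b',d') = (a,c) \<or> (b',d') = (b,d))"

fun crit :: "nat\<times>nat\<times>nat\<times>nat \<Rightarrow> nat\<times>nat\<times>nat\<times>nat \<Rightarrow> bool" where
 "crit (a,b,c,d) (a',b',c',d') =
   (let A=(a,c); B=(b,d); C=(a',c'); D=(b',d');
        t = [A,B] @ (if C = A \<or> C = B then [D] else [C]) in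
    mset (map mset (norm 30 [res1 t (a,b,c,d), res2 t (a,b,c,d)])) =
    mset (map mset (norm 30 [res1 t (a',b',c',d'), res2 t (a',b',c',d')])))"

definition quadsL :: "(nat\<times>nat\<times>nat\<times>nat) list" where
 "quadsL = [(0,1,2,3),(0,1,2,4),(0,1,2,5),(0,1,3,4),(0,1,3,5),(0,1,4,5),(0,2,3,4),(0,2,3,5),(0,2,4,5),(0,3,4,5),(1,2,3,4),(1,2,3,5),(1,2,4,5),(1,3,4,5),(2,3,4,5)]"

lemma quads_eq: "quads = quadsL"
  unfolding quads_def quadsL_def by code_simp

fun chk2 :: "nat\<times>nat\<times>nat\<times>nat \<Rightarrow> (nat\<times>nat\<times>nat\<times>nat) list \<Rightarrow> bool" where
  "chk2 q [] = True"
| "chk2 q (q'#qs) = ((if shr q q' then crit q q' else True) \<and> chk2 q qs)"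

fun chk1 :: "(nat\<times>nat\<times>nat\<times>nat) list \<Rightarrow> bool" where
  "chk1 [] = True"
| "chk1 (q#qs) = (chk2 q quadsL \<and> chk1 qs)"

lemma concrete0: "chk1 quadsL"
  by code_simp

lemma chk2_D: "chk2 q qs \<Longrightarrow> q' \<in> set qs \<Longrightarrow> shr q q' \<Longrightarrow> crit q q'"
  by (induction q qs rule: chk2.induct) auto

lemma chk1_D: "chk1 qs \<Longrightarrow> q \<in> set qs \<Longrightarrow> q' \<in> set quadsL \<Longrightarrow> shr q q' \<Longrightarrow> crit q q'"
  by (induction qs rule: chk1.induct) (auto intro: chk2_D)

lemma concrete: "q \<in> set quads \<Longrightarrow> q' \<in> set quads \<Longrightarrow> shr q q' \<Longrightarrow> crit q q'"
  using chk1_D[OF concrete0] unfolding quads_eq by blast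

definition chd :: "nat \<times> nat \<Rightarrow> nat set" where "chd x = {fst x, snd x}"
definition sem :: "(nat\<times>nat) list \<Rightarrow> product" where "sem L = mset (map chd L)"
definition semE :: "(nat\<times>nat) list list \<Rightarrow> expr" where "semE P = mset (map sem P)"

lemma sem_remove1: "x \<in> set L \<Longrightarrow> sem L = add_mset (chd x) (sem (remove1 x L))"
  by (induction L) (auto simp: sem_def)

lemma find_SomeD': "find P xs = Some x \<Longrightarrow> P x \<and> x \<in> set xs"
  by (auto simp: find_Some_iff)

lemma redex_some:
  assumes "redex L = Some (a,b,c,d)"
  shows "a<b \<and> b<c \<and> c<d \<and> (a,c) \<in> set L \<and> (b,d) \<in> set L"
proof -
  obtain v where v: "find (\<lambda>((a,c),(b,d)). a<b \<and> b<c \<and> c<d) (List.product L L) = Some v"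
    "(\<lambda>((a,c),(b,d)). (a,b,c,d)) v = (a,b,c,d)"
    using assms unfolding redex_def by auto
  obtain a1 c1 b1 d1 where vv: "v = ((a1,c1),(b1,d1))" by (cases v) auto
  show ?thesis using find_SomeD'[OF v(1)] v(2) unfolding vv by auto
qed

lemma sem_res:
  assumes "(a,c) \<in> set L" "(b,d) \<in> set (remove1 (a,c) L)"
  shows "sem L = add_mset {a,c} (add_mset {b,d} (sem (remove1 (b,d) (remove1 (a,c) L))))"
    "sem (res1 L (a,b,c,d)) = add_mset {a,b} (add_mset {c,d} (sem (remove1 (b,d) (remove1 (a,c) L))))"
    "sem (res2 L (a,b,c,d)) = add_mset {a,d} (add_mset {b,c} (sem (remove1 (b,d) (remove1 (a,c) L))))"
  using sem_remove1[OF assms(1)] sem_remove1[OF assms(2)] by (simp_all add: sem_def chd_def)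

lemma nstep_sound: "nstep P = Some P' \<Longrightarrow> expand_step (semE P) (semE P')"
proof (induction P arbitrary: P')
  case Nil thus ?case by simp
next
  case (Cons L P)
  show ?case
  proof (cases "redex L")
    case None
    then obtain P0 where P0: "nstep P = Some P0" "P' = L # P0" using Cons.prems by auto
    with Cons.IH have "expand_step (semE P) (semE P0)" by blast
    from step_context[OF this, of "{#sem L#}"] show ?thesis using P0(2) by (simp add: semE_def)
  next
    case (Some q)
    obtain a b c d where q: "q = (a,b,c,d)" by (cases q) auto
    have h: "a<b" "b<c" "c<d" "(a,c) \<in> set L" "(b,d) \<in> set L"
      using redex_some[of L a b c d] Some q by auto
    have m: "(b,d) \<in> set (remove1 (a,c) L)" using h by auto
    have P': "P' = res1 L q # res2 L q # P" using Cons.prems Some by simp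
    have "expand_step (semE (L#P)) (semE (L#P) - {#sem L#} +
       {#add_mset {a,b} (add_mset {c,d} (sem (remove1 (b,d) (remove1 (a,c) L)))),
         add_mset {a,d} (add_mset {b,c} (sem (remove1 (b,d) (remove1 (a,c) L))))#})"
      by (rule step_intro2[OF _ h(1-3) sem_res(1)[OF h(4) m]]) (simp add: semE_def)
    then show ?thesis unfolding P' q using sem_res[OF h(4) m] by (simp add: semE_def)
  qed
qed

lemma norm_sound: "expand_step\<^sup>*\<^sup>* (semE P) (semE (norm n P))"
proof (induction n arbitrary: P)
  case 0 then show ?case by simp
next
  case (Suc n)
  show ?case
  proof (cases "nstep P")
    case None then show ?thesis by simp
  next
    case (Some P')
    then show ?thesis using nstep_sound[OF Some] Suc[of P']
      by (simp add: converse_rtranclp_into_rtranclp)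
  qed
qed

section \<open>Transfer along strictly monotone maps\<close>

definition GE :: "(nat \<Rightarrow> nat) \<Rightarrow> product \<Rightarrow> expr \<Rightarrow> expr" where
  "GE g r E = image_mset (\<lambda>p. image_mset (image g) p + r) E"

lemma transfer_step:
  assumes sm: "strict_mono g" and st: "expand_step E E'"
  shows "expand_step (GE g r E) (GE g r E')"
proof -
  obtain p a b c d R where h: "p \<in># E" "a < b" "b < c" "c < d"
    "p = add_mset {a,c} (add_mset {b,d} R)"
    "E' = E - {#p#} + {#add_mset {a,b} (add_mset {c,d} R), add_mset {a,d} (add_mset {b,c} R)#}"
    using step_elim[OF st] by blast
  have lt: "g a < g b" "g b < g c" "g c < g d" using h(2-4) sm by (simp_all add: strict_mono_less)
  have Gp: "image_mset (image g) p + r = add_mset {g a, g c} (add_mset {g b, g d} (image_mset (image g) R + r))"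
    using h(5) by simp
  have inE: "image_mset (image g) p + r \<in># GE g r E" using h(1) unfolding GE_def by simp
  have "GE g r E' = GE g r E - {#image_mset (image g) p + r#} +
     {#add_mset {g a, g b} (add_mset {g c, g d} (image_mset (image g) R + r)),
       add_mset {g a, g d} (add_mset {g b, g c} (image_mset (image g) R + r))#}"
    using h(1,6) by (simp add: GE_def image_mset_Diff)
  then show ?thesis using step_intro2[OF inE lt Gp] by simp
qed

lemma transfer_steps:
  assumes sm: "strict_mono g" and st: "expand_step\<^sup>*\<^sup>* E E'"
  shows "expand_step\<^sup>*\<^sup>* (GE g r E) (GE g r E')"
  using st
proof (induction rule: rtranclp_induct)
  case base then show ?case by simp
next
  case (step y z) then show ?case using transfer_step[OF sm]
    by (meson rtranclp.rtrancl_into_rtrancl)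
qed

lemma remove1_map_inj: "inj f \<Longrightarrow> map f (remove1 x xs) = remove1 (f x) (map f xs)"
  by (induction xs) (auto simp: inj_eq)

lemma sem_map: "image_mset (image g) (sem L) = sem (map (map_prod g g) L)"
  by (induction L) (auto simp: sem_def chd_def)

lemma res_map:
  assumes "inj g"
  shows "map (map_prod g g) (res1 L (i,j,k,l)) = res1 (map (map_prod g g) L) (g i, g j, g k, g l)"
    "map (map_prod g g) (res2 L (i,j,k,l)) = res2 (map (map_prod g g) L) (g i, g j, g k, g l)"
proof -
  have "inj (map_prod g g)" using assms by (auto simp: inj_def)
  then show "map (map_prod g g) (res1 L (i,j,k,l)) = res1 (map (map_prod g g) L) (g i, g j, g k, g l)"
    "map (map_prod g g) (res2 L (i,j,k,l)) = res2 (map (map_prod g g) L) (g i, g j, g k, g l)"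
    by (simp_all add: remove1_map_inj)
qed

lemma semE_alt: "semE P = image_mset (image_mset chd) (mset (map mset P))"
  by (induction P) (auto simp: semE_def sem_def)

lemma crit_transfer:
  assumes sm: "strict_mono g"
    and q1: "(i1,j1,k1,l1) \<in> set quads" and q2: "(i2,j2,k2,l2) \<in> set quads"
    and share: "(i2,k2) = (i1,k1) \<or> (i2,k2) = (j1,l1) \<or> (j2,l2) = (i1,k1) \<or> (j2,l2) = (j1,l1)"
    and T: "T = map (map_prod g g) ([(i1,k1),(j1,l1)] @ (if (i2,k2) = (i1,k1) \<or> (i2,k2) = (j1,l1) then [(j2,l2)] else [(i2,k2)]))"
  shows "\<exists>F. expand_step\<^sup>*\<^sup>* {#sem (res1 T (g i1, g j1, g k1, g l1)) + r, sem (res2 T (g i1, g j1, g k1, g l1)) + r#} F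
           \<and> expand_step\<^sup>*\<^sup>* {#sem (res1 T (g i2, g j2, g k2, g l2)) + r, sem (res2 T (g i2, g j2, g k2, g l2)) + r#} F"
proof -
  define t where "t = [(i1,k1),(j1,l1)] @ (if (i2,k2) = (i1,k1) \<or> (i2,k2) = (j1,l1) then [(j2,l2)] else [(i2,k2)])"
  have cr: "crit (i1,j1,k1,l1) (i2,j2,k2,l2)" using concrete[OF q1 q2] share by simp
  define N1 where "N1 = norm 30 [res1 t (i1,j1,k1,l1), res2 t (i1,j1,k1,l1)]"
  define N2 where "N2 = norm 30 [res1 t (i2,j2,k2,l2), res2 t (i2,j2,k2,l2)]"
  have "mset (map mset N1) = mset (map mset N2)"
    using cr by (simp only: N1_def N2_def t_def crit.simps Let_def)
  then have eqN: "semE N1 = semE N2" by (simp add: semE_alt)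
  have inj: "inj g" using sm by (simp add: strict_mono_on_imp_inj_on)
  have G: "GE g r (semE [res1 t (i,j,k,l), res2 t (i,j,k,l)]) =
      {#sem (res1 T (g i, g j, g k, g l)) + r, sem (res2 T (g i, g j, g k, g l)) + r#}" for i j k l
    unfolding GE_def semE_def T t_def[symmetric] res_map(1)[OF inj, symmetric] res_map(2)[OF inj, symmetric]
    by (simp add: sem_map del: res1.simps res2.simps)
  have s1: "expand_step\<^sup>*\<^sup>* (GE g r (semE [res1 t (i1,j1,k1,l1), res2 t (i1,j1,k1,l1)])) (GE g r (semE N1))"
    unfolding N1_def by (rule transfer_steps[OF sm norm_sound])
  have s2: "expand_step\<^sup>*\<^sup>* (GE g r (semE [res1 t (i2,j2,k2,l2), res2 t (i2,j2,k2,l2)])) (GE g r (semE N1))"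
    unfolding eqN N2_def by (rule transfer_steps[OF sm norm_sound])
  show ?thesis using s1 s2 unfolding G by blast
qed

lemma embed:
  fixes V :: "nat set"
  assumes fin: "finite V" and card: "card V \<le> 6"
  obtains g :: "nat \<Rightarrow> nat" where "strict_mono g" "\<And>v. v \<in> V \<Longrightarrow> \<exists>i<6. g i = v"
proof -
  obtain xs where xs: "sorted_wrt (<) xs" "set xs = V"
    using ex1_sorted_list_for_set_if_finite[OF fin] by blast
  have dis: "distinct xs" using xs(1) by (simp add: strict_sorted_iff)
  have "length xs = card V" using distinct_card[OF dis] xs(2) by simp
  then have len: "length xs \<le> 6" using card by simp
  define g where "g i = (if i < length xs then xs ! i else Max V + 1 + i)" for i
  have sm: "strict_mono g"
  proof (rule strict_monoI)
    fix i j :: nat assume ij: "i < j"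
    show "g i < g j"
    proof (cases "j < length xs")
      case True
      have "xs ! i < xs ! j" by (rule sorted_wrt_nth_less[OF xs(1) ij True])
      then show ?thesis using True ij unfolding g_def by simp
    next
      case False
      show ?thesis
      proof (cases "i < length xs")
        case True
        then have "xs ! i \<in> set xs" by (rule nth_mem)
        then have "xs ! i \<in> V" using xs(2) by simp
        then have "xs ! i \<le> Max V" using fin by simp
        then show ?thesis using True False unfolding g_def by simp
      next
        case False2: False
        then show ?thesis using False ij unfolding g_def by simp
      qed
    qed
  qed
  have "\<exists>i<6. g i = v" if "v \<in> V" for v
  proof -
    have "v \<in> set xs" using that xs(2) by simp
    then obtain i where i: "i < length xs" "xs ! i = v" by (auto simp: in_set_conv_nth)
    then have "g i = v" unfolding g_def by simp
    moreover have "i < 6" using i(1) len by simp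
    ultimately show ?thesis by blast
  qed
  then show ?thesis using that sm by blast
qed

section \<open>Local confluence\<close>

lemma cancel2: "add_mset A (add_mset B (add_mset C (add_mset D S))) = add_mset C (add_mset D R') \<Longrightarrow>
  R' = add_mset A (add_mset B S)"
  by (metis add_mset_commute add_mset_remove_trivial)

lemma perm4:
  "{#add_mset v1 (add_mset v2 (add_mset u1 (add_mset u2 S))), add_mset v3 (add_mset v4 (add_mset u1 (add_mset u2 S)))#}
   + {#add_mset v1 (add_mset v2 (add_mset u3 (add_mset u4 S))), add_mset v3 (add_mset v4 (add_mset u3 (add_mset u4 S)))#}
   = {#add_mset u1 (add_mset u2 (add_mset v1 (add_mset v2 S))), add_mset u3 (add_mset u4 (add_mset v1 (add_mset v2 S)))#}
   + {#add_mset u1 (add_mset u2 (add_mset v3 (add_mset v4 S))), add_mset u3 (add_mset u4 (add_mset v3 (add_mset v4 S)))#}"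
  by (simp add: add_mset_commute)

lemma join_intro: "expand_step\<^sup>*\<^sup>* x F \<Longrightarrow> expand_step\<^sup>*\<^sup>* y F \<Longrightarrow> \<exists>F. expand_step\<^sup>*\<^sup>* x F \<and> expand_step\<^sup>*\<^sup>* y F"
  by blast

lemma mem2: "x \<in># add_mset y1 (add_mset y2 M) \<Longrightarrow> x \<noteq> y1 \<Longrightarrow> x \<noteq> y2 \<Longrightarrow> x \<in># M"
  by auto

lemma two_parallel:
  assumes "expand_step {#p1#} U" "expand_step {#p2#} V"
  shows "expand_step\<^sup>*\<^sup>* {#p1, p2#} (U + V)"
proof -
  have 1: "expand_step ({#p2#} + {#p1#}) ({#p2#} + U)" by (rule step_context[OF assms(1)])
  have 2: "expand_step (U + {#p2#}) (U + V)" by (rule step_context[OF assms(2)])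
  have "{#p1, p2#} = {#p2#} + {#p1#}" by simp
  moreover have "{#p2#} + U = U + {#p2#}" by (simp add: add.commute)
  ultimately show ?thesis using 1 2 by (metis rtranclp.rtrancl_refl rtranclp.rtrancl_into_rtrancl)
qed

lemma local_conf:
  assumes s1: "expand_step E E1" and s2: "expand_step E E2"
  shows "\<exists>F. expand_step\<^sup>*\<^sup>* E1 F \<and> expand_step\<^sup>*\<^sup>* E2 F"
proof -
  obtain p a b c d R where h1: "p \<in># E" "a < b" "b < c" "c < d"
    "p = add_mset {a,c} (add_mset {b,d} R)"
    "E1 = E - {#p#} + {#add_mset {a,b} (add_mset {c,d} R), add_mset {a,d} (add_mset {b,c} R)#}"
    using step_elim[OF s1] by blast
  obtain q a' b' c' d' R' where h2: "q \<in># E" "a' < b'" "b' < c'" "c' < d'"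
    "q = add_mset {a',c'} (add_mset {b',d'} R')"
    "E2 = E - {#q#} + {#add_mset {a',b'} (add_mset {c',d'} R'), add_mset {a',d'} (add_mset {b',c'} R')#}"
    using step_elim[OF s2] by blast
  define p1 where "p1 = add_mset {a,b} (add_mset {c,d} R)"
  define p2 where "p2 = add_mset {a,d} (add_mset {b,c} R)"
  define q1 where "q1 = add_mset {a',b'} (add_mset {c',d'} R')"
  define q2 where "q2 = add_mset {a',d'} (add_mset {b',c'} R')"
  show ?thesis
  proof (cases "p = q")
    case False
    obtain E0 where E0: "E = add_mset p (add_mset q E0)" using split2[OF h1(1) h2(1) False] by blast
    have E1: "E1 = add_mset q (E0 + {#p1, p2#})" using h1(6) E0 unfolding p1_def p2_def by simp
    have E2: "E2 = add_mset p (E0 + {#q1, q2#})" using h2(6) E0 unfolding q1_def q2_def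
      by (simp add: add_mset_commute)
    have "expand_step E1 (E1 - {#q#} + {#q1, q2#})"
      unfolding q1_def q2_def by (rule step_intro2[OF _ h2(2-5)]) (simp add: E1)
    moreover have "E1 - {#q#} + {#q1, q2#} = E0 + {#p1, p2, q1, q2#}" unfolding E1 by simp
    moreover have "expand_step E2 (E2 - {#p#} + {#p1, p2#})"
      unfolding p1_def p2_def by (rule step_intro2[OF _ h1(2-5)]) (simp add: E2)
    moreover have "E2 - {#p#} + {#p1, p2#} = E0 + {#p1, p2, q1, q2#}" unfolding E2
      by (simp add: add_mset_commute)
    ultimately show ?thesis by (metis r_into_rtranclp)
  next
    case True
    then have pq: "add_mset {a,c} (add_mset {b,d} R) = add_mset {a',c'} (add_mset {b',d'} R')"
      using h1(5) h2(5) by simp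
    consider (i) "(a',c') = (a,c) \<and> (b',d') = (b,d)"
      | (iii) "\<not> ((a',c') = (a,c) \<and> (b',d') = (b,d))"
              "(a',c') = (a,c) \<or> (a',c') = (b,d) \<or> (b',d') = (a,c) \<or> (b',d') = (b,d)"
      | (ii) "(a',c') \<noteq> (a,c)" "(a',c') \<noteq> (b,d)" "(b',d') \<noteq> (a,c)" "(b',d') \<noteq> (b,d)"
      by blast
    then show ?thesis
    proof cases
      case i
      then have "R = R'" using pq by simp
      then have "E1 = E2" using i h1(6) h2(6) True by simp
      then show ?thesis by blast
    next
      case ii
      have ne: "{a',c'} \<noteq> {a,c}" "{a',c'} \<noteq> {b,d}" "{b',d'} \<noteq> {a,c}" "{b',d'} \<noteq> {b,d}"
        "{a',c'} \<noteq> {b',d'}"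
        using ii h1(2-4) h2(2-4) by (auto simp: chd_eq)
      have m1: "{a',c'} \<in># add_mset {a,c} (add_mset {b,d} R)" "{b',d'} \<in># add_mset {a,c} (add_mset {b,d} R)"
        unfolding pq by simp_all
      have "{a',c'} \<in># R" "{b',d'} \<in># R" by (rule mem2[OF m1(1) ne(1,2)], rule mem2[OF m1(2) ne(3,4)])
      then obtain S where S: "R = add_mset {a',c'} (add_mset {b',d'} S)" using split2[of "{a',c'}" R "{b',d'}"] ne(5) by meson
      have R': "R' = add_mset {a,c} (add_mset {b,d} S)"
        using pq unfolding S by (rule cancel2)
      define X0 where "X0 = E - {#p#}"
      have E1: "E1 = X0 + {#p1, p2#}" unfolding X0_def p1_def p2_def h1(6) by simp
      have E2: "E2 = X0 + {#q1, q2#}" unfolding X0_def q1_def q2_def h2(6) True by simp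
      have st1: "expand_step {#p1#} {#add_mset {a',b'} (add_mset {c',d'} (add_mset {a,b} (add_mset {c,d} S))),
                                      add_mset {a',d'} (add_mset {b',c'} (add_mset {a,b} (add_mset {c,d} S)))#}"
        by (rule single_step[OF h2(2-4)]) (simp_all add: p1_def S add_mset_commute)
      have st2: "expand_step {#p2#} {#add_mset {a',b'} (add_mset {c',d'} (add_mset {a,d} (add_mset {b,c} S))),
                                      add_mset {a',d'} (add_mset {b',c'} (add_mset {a,d} (add_mset {b,c} S)))#}"
        by (rule single_step[OF h2(2-4)]) (simp_all add: p2_def S add_mset_commute)
      have st3: "expand_step {#q1#} {#add_mset {a,b} (add_mset {c,d} (add_mset {a',b'} (add_mset {c',d'} S))),
                                      add_mset {a,d} (add_mset {b,c} (add_mset {a',b'} (add_mset {c',d'} S)))#}"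
        by (rule single_step[OF h1(2-4)]) (simp_all add: q1_def R' add_mset_commute)
      have st4: "expand_step {#q2#} {#add_mset {a,b} (add_mset {c,d} (add_mset {a',d'} (add_mset {b',c'} S))),
                                      add_mset {a,d} (add_mset {b,c} (add_mset {a',d'} (add_mset {b',c'} S)))#}"
        by (rule single_step[OF h1(2-4)]) (simp_all add: q2_def R' add_mset_commute)
      have j1: "expand_step\<^sup>*\<^sup>* E1 (X0 + ({#add_mset {a',b'} (add_mset {c',d'} (add_mset {a,b} (add_mset {c,d} S))),
                                      add_mset {a',d'} (add_mset {b',c'} (add_mset {a,b} (add_mset {c,d} S)))#} +
                {#add_mset {a',b'} (add_mset {c',d'} (add_mset {a,d} (add_mset {b,c} S))),
                                      add_mset {a',d'} (add_mset {b',c'} (add_mset {a,d} (add_mset {b,c} S)))#}))"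
        unfolding E1 by (rule steps_context[OF two_parallel[OF st1 st2]])
      have j2: "expand_step\<^sup>*\<^sup>* E2 (X0 + ({#add_mset {a,b} (add_mset {c,d} (add_mset {a',b'} (add_mset {c',d'} S))),
                                      add_mset {a,d} (add_mset {b,c} (add_mset {a',b'} (add_mset {c',d'} S)))#} +
               {#add_mset {a,b} (add_mset {c,d} (add_mset {a',d'} (add_mset {b',c'} S))),
                                      add_mset {a,d} (add_mset {b,c} (add_mset {a',d'} (add_mset {b',c'} S)))#}))"
        unfolding E2 by (rule steps_context[OF two_parallel[OF st3 st4]])
      have eqj: "({#add_mset {a',b'} (add_mset {c',d'} (add_mset {a,b} (add_mset {c,d} S))),
                                      add_mset {a',d'} (add_mset {b',c'} (add_mset {a,b} (add_mset {c,d} S)))#} +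
                {#add_mset {a',b'} (add_mset {c',d'} (add_mset {a,d} (add_mset {b,c} S))),
                                      add_mset {a',d'} (add_mset {b',c'} (add_mset {a,d} (add_mset {b,c} S)))#}) =
         ({#add_mset {a,b} (add_mset {c,d} (add_mset {a',b'} (add_mset {c',d'} S))),
                                      add_mset {a,d} (add_mset {b,c} (add_mset {a',b'} (add_mset {c',d'} S)))#} +
               {#add_mset {a,b} (add_mset {c,d} (add_mset {a',d'} (add_mset {b',c'} S))),
                                      add_mset {a,d} (add_mset {b,c} (add_mset {a',d'} (add_mset {b',c'} S)))#})"
        by (rule perm4)
      show ?thesis using j1[unfolded eqj] j2 by (rule join_intro)
    next
      case iii
      define Zp where "Zp = (if (a',c') = (a,c) \<or> (a',c') = (b,d) then (b',d') else (a',c'))"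
      define T where "T = [(a,c),(b,d),Zp]"
      have Zord: "fst Zp < snd Zp" using h2(2-4) unfolding Zp_def by auto
      have Zne: "Zp \<noteq> (a,c)" "Zp \<noteq> (b,d)" using iii h1(2-4) h2(2-4) unfolding Zp_def by auto
      have Zne': "chd Zp \<noteq> {a,c}" "chd Zp \<noteq> {b,d}"
      proof -
        obtain z1 z2 where z: "Zp = (z1,z2)" by (cases Zp) auto
        have "z1 < z2" using Zord z by simp
        then show "chd Zp \<noteq> {a,c}" "chd Zp \<noteq> {b,d}"
          using Zne h1(2-4) unfolding z chd_def by (simp_all add: chd_eq)
      qed
      have "chd Zp \<in># add_mset {a',c'} (add_mset {b',d'} R')" unfolding Zp_def
        by (cases "(a',c') = (a,c) \<or> (a',c') = (b,d)") (simp_all add: chd_def)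
      then have "chd Zp \<in># add_mset {a,c} (add_mset {b,d} R)" using pq by simp
      then have "chd Zp \<in># R" by (rule mem2[OF _ Zne'])
      then obtain r where r: "R = add_mset (chd Zp) r" by (meson multi_member_split)
      have CT: "(a',c') \<in> set T \<and> (b',d') \<in> set (remove1 (a',c') T)"
      proof (cases "(a',c') = (a,c)")
        case True
        then have "(b',d') \<noteq> (a,c)" using h2(2) by auto
        then show ?thesis using True unfolding T_def Zp_def by simp
      next
        case False1: False
        show ?thesis
        proof (cases "(a',c') = (b,d)")
          case True
          then have "(b',d') \<noteq> (b,d)" using h2(2) by auto
          then show ?thesis using True False1 unfolding T_def Zp_def by simp
        next
          case False
          then have "(b',d') = (a,c) \<or> (b',d') = (b,d)" using iii(2) False1 by blast
          then show ?thesis using False False1 unfolding T_def Zp_def by auto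
        qed
      qed
      then have CT: "(a',c') \<in> set T" "(b',d') \<in> set (remove1 (a',c') T)" by auto
      have semT: "sem T = add_mset {a,c} (add_mset {b,d} {#chd Zp#})" by (simp add: T_def sem_def chd_def)
      have pT: "p = sem T + r" using h1(5) r semT by simp
      define T2 where "T2 = remove1 (b',d') (remove1 (a',c') T)"
      have sT2: "sem T = add_mset {a',c'} (add_mset {b',d'} (sem T2))" using sem_res(1)[OF CT] T2_def by simp
      have R'eq: "R' = sem T2 + r" using h2(5) True pT sT2 by simp
      have rm: "remove1 (b,d) (remove1 (a,c) T) = [Zp]" using Zne h1(2) by (auto simp: T_def)
      have res1a: "sem (res1 T (a,b,c,d)) + r = add_mset {a,b} (add_mset {c,d} R)"
        and res2a: "sem (res2 T (a,b,c,d)) + r = add_mset {a,d} (add_mset {b,c} R)"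
        using rm r by (simp_all add: sem_def chd_def)
      have res1b: "sem (res1 T (a',b',c',d')) + r = add_mset {a',b'} (add_mset {c',d'} R')"
        and res2b: "sem (res2 T (a',b',c',d')) + r = add_mset {a',d'} (add_mset {b',c'} R')"
        using R'eq by (simp_all add: T2_def sem_def chd_def)
      define V where "V = {a,b,c,d,a',b',c',d'}"
      have "\<exists>vl. V \<subseteq> set vl \<and> length vl = 6"
        using iii(2)
      proof (elim disjE)
        assume "(a',c') = (a,c)" then show ?thesis unfolding V_def by (intro exI[of _ "[a,b,c,d,b',d']"]) auto
      next
        assume "(a',c') = (b,d)" then show ?thesis unfolding V_def by (intro exI[of _ "[a,b,c,d,b',d']"]) auto
      next
        assume "(b',d') = (a,c)" then show ?thesis unfolding V_def by (intro exI[of _ "[a,b,c,d,a',c']"]) auto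
      next
        assume "(b',d') = (b,d)" then show ?thesis unfolding V_def by (intro exI[of _ "[a,b,c,d,a',c']"]) auto
      qed
      then obtain vl where vl: "V \<subseteq> set vl" "length vl = 6" by blast
      have "card V \<le> card (set vl)" by (rule card_mono[OF _ vl(1)]) simp
      also have "\<dots> \<le> 6" using card_length[of vl] vl(2) by simp
      finally have cardV: "card V \<le> 6" .
      have finV: "finite V" unfolding V_def by simp
      obtain g :: "nat \<Rightarrow> nat" where g: "strict_mono g" "\<And>v. v \<in> V \<Longrightarrow> \<exists>i<(6::nat). g i = v"
        using embed[OF finV cardV] by blast
      obtain ia where ia: "ia < 6" "a = g ia" using g(2)[of a] unfolding V_def by auto
      obtain ib where ib: "ib < 6" "b = g ib" using g(2)[of b] unfolding V_def by auto
      obtain ic where ic: "ic < 6" "c = g ic" using g(2)[of c] unfolding V_def by auto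
      obtain id where id: "id < 6" "d = g id" using g(2)[of d] unfolding V_def by auto
      obtain ia' where ia': "ia' < 6" "a' = g ia'" using g(2)[of a'] unfolding V_def by auto
      obtain ib' where ib': "ib' < 6" "b' = g ib'" using g(2)[of b'] unfolding V_def by auto
      obtain ic' where ic': "ic' < 6" "c' = g ic'" using g(2)[of c'] unfolding V_def by auto
      obtain id' where id': "id' < 6" "d' = g id'" using g(2)[of d'] unfolding V_def by auto
      note sub = ia(2) ib(2) ic(2) id(2) ia'(2) ib'(2) ic'(2) id'(2)
      have q1: "(ia,ib,ic,id) \<in> set quads"
        using h1(2-4) id(1) unfolding sub quads_iff by (simp add: strict_mono_less[OF g(1)])
      have q2: "(ia',ib',ic',id') \<in> set quads"
        using h2(2-4) id'(1) unfolding sub quads_iff by (simp add: strict_mono_less[OF g(1)])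
      have share: "(ia',ic') = (ia,ic) \<or> (ia',ic') = (ib,id) \<or> (ib',id') = (ia,ic) \<or> (ib',id') = (ib,id)"
        using iii(2) unfolding sub by (simp add: strict_mono_eq[OF g(1)])
      have Tm: "T = map (map_prod g g) ([(ia,ic),(ib,id)] @ (if (ia',ic') = (ia,ic) \<or> (ia',ic') = (ib,id) then [(ib',id')] else [(ia',ic')]))"
        unfolding T_def Zp_def sub by (simp add: strict_mono_eq[OF g(1)])
      obtain F where F: "expand_step\<^sup>*\<^sup>* {#sem (res1 T (g ia, g ib, g ic, g id)) + r, sem (res2 T (g ia, g ib, g ic, g id)) + r#} F"
        "expand_step\<^sup>*\<^sup>* {#sem (res1 T (g ia', g ib', g ic', g id')) + r, sem (res2 T (g ia', g ib', g ic', g id')) + r#} F"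
        using crit_transfer[OF g(1) q1 q2 share Tm, of r] by blast
      have F1: "expand_step\<^sup>*\<^sup>* {#add_mset {a,b} (add_mset {c,d} R), add_mset {a,d} (add_mset {b,c} R)#} F"
        using F(1) unfolding sub[symmetric] res1a res2a .
      have F2: "expand_step\<^sup>*\<^sup>* {#add_mset {a',b'} (add_mset {c',d'} R'), add_mset {a',d'} (add_mset {b',c'} R')#} F"
        using F(2) unfolding sub[symmetric] res1b res2b .
      have "expand_step\<^sup>*\<^sup>* E1 (E - {#p#} + F)" unfolding h1(6) by (rule steps_context[OF F1])
      moreover have "expand_step\<^sup>*\<^sup>* E2 (E - {#p#} + F)" unfolding h2(6) True by (rule steps_context[OF F2])
      ultimately show ?thesis by (rule join_intro)
    qed
  qed
qed

theorem theoremt: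
  fixes E :: expr
  assumes "valid_expr E"
  shows "(\<nexists>f :: nat \<Rightarrow> expr. f 0 = E \<and> (\<forall>i. expand_step (f i) (f (Suc i))))
       \<and> (\<forall>N1 N2. expand_step\<^sup>*\<^sup>* E N1 \<and> normal_form N1 \<and>
                  expand_step\<^sup>*\<^sup>* E N2 \<and> normal_form N2 \<longrightarrow> N1 = N2)"
proof -
  define U where "U = (\<Union>p\<in>set_mset E. \<Union>s\<in>{s. s \<in># p \<and> card s = 2}. s)"
  have "finite U" unfolding U_def
  proof (intro finite_UN_I)
    show "finite (set_mset E)" by simp
    fix p assume "p \<in> set_mset E"
    show "finite {s. s \<in># p \<and> card s = 2}" by (rule finite_subset[of _ "set_mset p"]) auto
    fix s assume "s \<in> {s. s \<in># p \<and> card s = 2}"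
    then show "finite s" by (auto intro: card_ge_0_finite)
  qed
  then obtain M where M: "\<forall>v\<in>U. v \<le> M" using finite_nat_set_iff_bounded_le by blast
  have bE: "bnd M E" unfolding bnd_def using M unfolding U_def by blast
  define Rel where "Rel = {(y,x). bnd M x \<and> expand_step x y}"
  have wfR: "wf Rel"
  proof (rule wf_subset)
    show "wf (inv_image (mult less_than) (image_mset (phi M)))"
      by (intro wf_inv_image wf_mult wf_less_than)
    show "Rel \<subseteq> inv_image (mult less_than) (image_mset (phi M))"
      unfolding Rel_def using meas_dec by auto
  qed
  have inv: "\<And>x y. bnd M x \<Longrightarrow> expand_step x y \<Longrightarrow> bnd M y" using bnd_step by blast
  have part1: "\<nexists>f :: nat \<Rightarrow> expr. f 0 = E \<and> (\<forall>i. expand_step (f i) (f (Suc i)))"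
  proof
    assume "\<exists>f :: nat \<Rightarrow> expr. f 0 = E \<and> (\<forall>i. expand_step (f i) (f (Suc i)))"
    then obtain f :: "nat \<Rightarrow> expr" where f: "f 0 = E" "\<forall>i. expand_step (f i) (f (Suc i))" by blast
    have b: "bnd M (f i)" for i
    proof (induction i)
      case 0 then show ?case using f(1) bE by simp
    next
      case (Suc i) then show ?case using inv f(2) by blast
    qed
    have "\<forall>i. (f (Suc i), f i) \<in> Rel" unfolding Rel_def using b f(2) by simp
    then show False using wfR unfolding wf_iff_no_infinite_down_chain by blast
  qed
  have nm: "\<forall>y z. bnd M E \<longrightarrow> expand_step\<^sup>*\<^sup>* E y \<longrightarrow> \<not>(\<exists>u. expand_step y u) \<longrightarrow>
        expand_step\<^sup>*\<^sup>* E z \<longrightarrow> \<not>(\<exists>u. expand_step z u) \<longrightarrow> y = z"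
    by (rule newman[of "bnd M" expand_step, OF wfR[unfolded Rel_def] inv local_conf])
  show ?thesis using part1 nm bE unfolding normal_form_def by blast
qed

end
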